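(* Let $K\in\mathbb N$, $p_1,\dots,p_K>0$ with $\sum_k p_k=1$, $\sigma_1^2,\dots,\sigma_K^2>0$, and $\sigma_{\mathrm{glob}}^2=\sum_{k=1}^K p_k\sigma_k^2$. Let $Q(x)=\frac1{\sqrt2}(\operatorname{sign}(\operatorname{Re}x)+\mathrm j\operatorname{sign}(\operatorname{Im}x))$ and let $n\sim\mathcal N_{\mathbb C}(0,\eta^2)$, $\eta^2>0$. Let $\mathrm{MSE}_{\mathrm{GMM}}=\mathbb E[|h-\mathbb E[h\mid r]|^2]$ for $r=Q(h+n)$ with $h\sim\sum_k p_k\mathcal N_{\mathbb C}(0,\sigma_k^2)$ independent of $n$, and let $\mathrm{MSE}_{\mathrm{Gauss}}=\mathbb E[|g-\mathbb E[g\mid r']|^2]$ for $r'=Q(g+n)$ with $g\sim\mathcal N_{\mathbb C}(0,\sigma_{\mathrm{glob}}^2)$ independent of $n$. Then for every $\eta^2>0$, $$\mathrm{MSE}_{\mathrm{Gauss}}\le\mathrm{MSE}_{\mathrm{GMM}}.$$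
   Context: $\mathcal N_{\mathbb C}(0,\sigma^2)$ denotes the circularly symmetric complex Gaussian distribution with variance $\sigma^2$. The two MSEs are those of the respective conditional mean (MMSE) estimators, for signals with the same global variance. *)

theory Defs
  imports "HOL-Probability.Probability"
begin

definition cgauss_density :: "real \<Rightarrow> complex \<Rightarrow> real" where
  "cgauss_density v z = exp (- ((cmod z)^2 / v)) / (pi * v)"

definition gmm_density :: "nat \<Rightarrow> (nat \<Rightarrow> real) \<Rightarrow> (nat \<Rightarrow> real) \<Rightarrow> complex \<Rightarrow> real" where
  "gmm_density K p s z = (\<Sum>k<K. p k * cgauss_density (s k) z)"

definition Qb :: "complex \<Rightarrow> complex" where
  "Qb x = Complex (sgn (Re x)) (sgn (Im x)) / complex_of_real (sqrt 2)"

text \<open>Conditional mean E[X | R] for a discrete (finitely-valued) observation R,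
  evaluated at outcome w:  E[X 1{R = R w}] / P(R = R w).\<close>
definition cond_mean_disc :: "'a measure \<Rightarrow> ('a \<Rightarrow> complex) \<Rightarrow> ('a \<Rightarrow> 'b) \<Rightarrow> 'a \<Rightarrow> complex" where
  "cond_mean_disc M X R w =
     (let A = {x \<in> space M. R x = R w}
      in (\<integral>x. indicator A x *\<^sub>R X x \<partial>M) / complex_of_real (measure M A))"

definition mse_quant :: "'a measure \<Rightarrow> ('a \<Rightarrow> complex) \<Rightarrow> ('a \<Rightarrow> complex) \<Rightarrow> real" where
  "mse_quant M h n =
     (\<integral>w. (cmod (h w - cond_mean_disc M h (\<lambda>x. Qb (h x + n x)) w))^2 \<partial>M)"

end

theory Submission
  imports Defs "HOL-Real_Asymp.Real_Asymp"
begin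

lemma lborel_complex:
  "distr (lborel \<Otimes>\<^sub>M lborel) borel (\<lambda>(x,y). Complex x y) = (lborel :: complex measure)"
proof (rule lborel_eqI[symmetric])
  fix l u :: complex
  assume lu: "\<And>b. b \<in> Basis \<Longrightarrow> l \<bullet> b \<le> u \<bullet> b"
  have 1: "Re l \<le> Re u" "Im l \<le> Im u" using lu[of 1] lu[of \<i>] by (auto simp: inner_complex_def)
  have [measurable]: "(\<lambda>(x,y). Complex x y) \<in> borel_measurable (lborel \<Otimes>\<^sub>M lborel)"
    unfolding Complex_eq by measurable
  have pre: "(\<lambda>(x,y). Complex x y) -` box l u \<inter> space (lborel \<Otimes>\<^sub>M lborel) = {Re l<..<Re u} \<times> {Im l<..<Im u}"
    by (auto simp: in_box_complex_iff space_pair_measure)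
  show "emeasure (distr (lborel \<Otimes>\<^sub>M lborel) borel (\<lambda>(x,y). Complex x y)) (box l u) = (\<Prod>b\<in>Basis. (u - l) \<bullet> b)"
    using 1
    by (simp add: emeasure_distr pre lborel.emeasure_pair_measure_Times Basis_complex_def inner_complex_def ennreal_mult)
qed simp

lemma Complex_measurable[measurable]:
  assumes [measurable]: "f \<in> borel_measurable M" "g \<in> borel_measurable M"
  shows "(\<lambda>x. Complex (f x) (g x)) \<in> borel_measurable M"
  unfolding Complex_eq by measurable

lemma nn_integral_complex:
  fixes f :: "complex \<Rightarrow> ennreal"
  assumes [measurable]: "f \<in> borel_measurable borel"
  shows "(\<integral>\<^sup>+z. f z \<partial>lborel) = (\<integral>\<^sup>+x. \<integral>\<^sup>+y. f (Complex x y) \<partial>lborel \<partial>lborel)"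
proof -
  have "(\<integral>\<^sup>+z. f z \<partial>lborel) = (\<integral>\<^sup>+z. f z \<partial>distr (lborel \<Otimes>\<^sub>M lborel) borel (\<lambda>(x,y). Complex x y))"
    by (simp add: lborel_complex)
  also have "\<dots> = (\<integral>\<^sup>+p. f (Complex (fst p) (snd p)) \<partial>(lborel \<Otimes>\<^sub>M lborel))"
    by (subst nn_integral_distr) (auto simp: case_prod_beta')
  also have "\<dots> = (\<integral>\<^sup>+x. \<integral>\<^sup>+y. f (Complex x y) \<partial>lborel \<partial>lborel)"
    by (subst lborel.nn_integral_fst[symmetric]) auto
  finally show ?thesis .
qed

definition gn :: "real \<Rightarrow> real \<Rightarrow> real" where
  "gn v x = exp (- (x^2) / v) / sqrt (pi * v)"

lemma gn_nonneg[simp]: "0 \<le> v \<Longrightarrow> 0 \<le> gn v x"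
  by (simp add: gn_def)

lemma gn_measurable[measurable]: "gn v \<in> borel_measurable borel"
  unfolding gn_def[abs_def] by measurable

lemma cgauss_measurable[measurable]: "cgauss_density v \<in> borel_measurable borel"
  unfolding cgauss_density_def[abs_def] by measurable

lemma cg_split: "0 < v \<Longrightarrow> cgauss_density v (Complex x y) = gn v x * gn v y"
  by (simp add: cgauss_density_def gn_def cmod_def add_divide_distrib mult_exp_exp[symmetric]
      real_sqrt_mult[symmetric] diff_divide_distrib)
     (metis diff_conv_add_uminus exp_add)

lemma sf_L2: "sigma_finite_measure (lborel \<Otimes>\<^sub>M lborel :: (real \<times> real) measure)"
  by (subst lborel_prod) (rule sigma_finite_lborel)

lemma psf_L22: "pair_sigma_finite (lborel \<Otimes>\<^sub>M lborel :: (real \<times> real) measure) (lborel \<Otimes>\<^sub>M lborel :: (real \<times> real) measure)"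
  by (simp add: pair_sigma_finite_def sf_L2)

definition Phi :: "(real \<times> real) \<times> (real \<times> real) \<Rightarrow> complex \<times> complex" where
  "Phi v = (Complex (fst (fst v)) (fst (snd v)), Complex (snd (fst v)) (snd (snd v)))"

lemma Phi_measurable[measurable]: "Phi \<in> measurable ((lborel \<Otimes>\<^sub>M lborel) \<Otimes>\<^sub>M (lborel \<Otimes>\<^sub>M lborel)) (lborel \<Otimes>\<^sub>M lborel)"
  unfolding Phi_def by measurable

definition D2 :: "real \<Rightarrow> real \<Rightarrow> real \<times> real \<Rightarrow> real" where
  "D2 s e a = gn s (fst a) * gn e (snd a)"

lemma D2_measurable[measurable]: "D2 s e \<in> borel_measurable (lborel \<Otimes>\<^sub>M lborel)"
  unfolding D2_def[abs_def] by measurable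

lemma D2_nonneg[simp]: "0 \<le> s \<Longrightarrow> 0 \<le> e \<Longrightarrow> 0 \<le> D2 s e a"
  by (simp add: D2_def)

lemma nn4:
  fixes f :: "complex \<times> complex \<Rightarrow> ennreal"
  assumes f[measurable]: "f \<in> borel_measurable (lborel \<Otimes>\<^sub>M lborel)" and s: "0 < s" and e: "0 < e"
  shows "(\<integral>\<^sup>+w. ennreal (cgauss_density s (fst w) * cgauss_density e (snd w)) * f w \<partial>(lborel \<Otimes>\<^sub>M lborel))
       = (\<integral>\<^sup>+v. ennreal (D2 s e (fst v) * D2 s e (snd v)) * f (Phi v) \<partial>((lborel \<Otimes>\<^sub>M lborel) \<Otimes>\<^sub>M (lborel \<Otimes>\<^sub>M lborel)))"
proof -
  let ?T = "\<integral>\<^sup>+x. \<integral>\<^sup>+y. \<integral>\<^sup>+x'. \<integral>\<^sup>+y'. ennreal (gn s x * gn s y * (gn e x' * gn e y')) * f (Complex x y, Complex x' y') \<partial>lborel \<partial>lborel \<partial>lborel \<partial>lborel"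
  have "(\<integral>\<^sup>+w. ennreal (cgauss_density s (fst w) * cgauss_density e (snd w)) * f w \<partial>(lborel \<Otimes>\<^sub>M lborel))
     = (\<integral>\<^sup>+z. \<integral>\<^sup>+u. ennreal (cgauss_density s z * cgauss_density e u) * f (z, u) \<partial>lborel \<partial>lborel)"
    by (subst lborel.nn_integral_fst[symmetric]) auto
  also have "\<dots> = (\<integral>\<^sup>+z. \<integral>\<^sup>+x'. \<integral>\<^sup>+y'. ennreal (cgauss_density s z * (gn e x' * gn e y')) * f (z, Complex x' y') \<partial>lborel \<partial>lborel \<partial>lborel)"
    by (intro nn_integral_cong, subst nn_integral_complex) (auto simp: cg_split e)
  also have "\<dots> = ?T"
    by (subst nn_integral_complex) (auto simp: cg_split s)
  finally have L: "(\<integral>\<^sup>+w. ennreal (cgauss_density s (fst w) * cgauss_density e (snd w)) * f w \<partial>(lborel \<Otimes>\<^sub>M lborel)) = ?T" .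
  have "(\<integral>\<^sup>+v. ennreal (D2 s e (fst v) * D2 s e (snd v)) * f (Phi v) \<partial>((lborel \<Otimes>\<^sub>M lborel) \<Otimes>\<^sub>M (lborel \<Otimes>\<^sub>M lborel)))
     = (\<integral>\<^sup>+a. \<integral>\<^sup>+b. ennreal (D2 s e a * D2 s e b) * f (Phi (a, b)) \<partial>(lborel \<Otimes>\<^sub>M lborel) \<partial>(lborel \<Otimes>\<^sub>M lborel))"
    by (subst sigma_finite_measure.nn_integral_fst[OF sf_L2, symmetric]) auto
  also have "\<dots> = (\<integral>\<^sup>+a. \<integral>\<^sup>+y. \<integral>\<^sup>+y'. ennreal (D2 s e a * (gn s y * gn e y')) * f (Phi (a, (y, y'))) \<partial>lborel \<partial>lborel \<partial>(lborel \<Otimes>\<^sub>M lborel))"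
    by (intro nn_integral_cong, subst lborel.nn_integral_fst[symmetric]) (auto simp: D2_def)
  also have "\<dots> = (\<integral>\<^sup>+x. \<integral>\<^sup>+x'. \<integral>\<^sup>+y. \<integral>\<^sup>+y'. ennreal ((gn s x * gn e x') * (gn s y * gn e y')) * f (Complex x y, Complex x' y') \<partial>lborel \<partial>lborel \<partial>lborel \<partial>lborel)"
    by (subst lborel.nn_integral_fst[symmetric]) (auto simp: D2_def Phi_def)
  also have "\<dots> = ?T"
  proof (rule nn_integral_cong)
    fix x
    show "(\<integral>\<^sup>+x'. \<integral>\<^sup>+y. \<integral>\<^sup>+y'. ennreal ((gn s x * gn e x') * (gn s y * gn e y')) * f (Complex x y, Complex x' y') \<partial>lborel \<partial>lborel \<partial>lborel)
      = (\<integral>\<^sup>+y. \<integral>\<^sup>+x'. \<integral>\<^sup>+y'. ennreal (gn s x * gn s y * (gn e x' * gn e y')) * f (Complex x y, Complex x' y') \<partial>lborel \<partial>lborel \<partial>lborel)"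
      by (subst lborel_pair.Fubini') (auto simp: ac_simps)
  qed
  finally show ?thesis using L by simp
qed

lemma (in pair_sigma_finite) integrable_prod_mult:
  fixes f :: "'a \<Rightarrow> real" and g :: "'b \<Rightarrow> real"
  assumes f[measurable]: "integrable M1 f" and g[measurable]: "integrable M2 g"
  shows "integrable (M1 \<Otimes>\<^sub>M M2) (\<lambda>x. f (fst x) * g (snd x))"
proof (rule Fubini_integrable)
  show "integrable M1 (\<lambda>x. \<integral>y. norm (f (fst (x, y)) * g (snd (x, y))) \<partial>M2)"
    using f by (simp add: abs_mult integrable_abs)
  show "AE x in M1. integrable M2 (\<lambda>y. f (fst (x, y)) * g (snd (x, y)))"
    using g by simp
qed simp

lemma (in pair_sigma_finite) integral_prod_mult:
  fixes f :: "'a \<Rightarrow> real" and g :: "'b \<Rightarrow> real"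
  assumes f[measurable]: "integrable M1 f" and g[measurable]: "integrable M2 g"
  shows "(\<integral>x. f (fst x) * g (snd x) \<partial>(M1 \<Otimes>\<^sub>M M2)) = (\<integral>x. f x \<partial>M1) * (\<integral>y. g y \<partial>M2)"
  by (subst integral_fst'[symmetric, OF integrable_prod_mult[OF f g]]) simp

lemma meas4:
  assumes s: "0 < s" and e: "0 < e"
  shows "density (lborel \<Otimes>\<^sub>M lborel) (\<lambda>w. ennreal (cgauss_density s (fst w) * cgauss_density e (snd w)))
       = distr (density ((lborel \<Otimes>\<^sub>M lborel) \<Otimes>\<^sub>M (lborel \<Otimes>\<^sub>M lborel)) (\<lambda>v. ennreal (D2 s e (fst v) * D2 s e (snd v)))) (lborel \<Otimes>\<^sub>M lborel) Phi"
proof (rule measure_eqI)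
  fix A assume A: "A \<in> sets (density (lborel \<Otimes>\<^sub>M lborel) (\<lambda>w. ennreal (cgauss_density s (fst w) * cgauss_density e (snd w))))"
  then have A'[measurable]: "A \<in> sets (lborel \<Otimes>\<^sub>M lborel)" by simp
  have "emeasure (distr (density ((lborel \<Otimes>\<^sub>M lborel) \<Otimes>\<^sub>M (lborel \<Otimes>\<^sub>M lborel)) (\<lambda>v. ennreal (D2 s e (fst v) * D2 s e (snd v)))) (lborel \<Otimes>\<^sub>M lborel) Phi) A
     = (\<integral>\<^sup>+v. ennreal (D2 s e (fst v) * D2 s e (snd v)) * indicator A (Phi v) \<partial>((lborel \<Otimes>\<^sub>M lborel) \<Otimes>\<^sub>M (lborel \<Otimes>\<^sub>M lborel)))"
  proof -
    have P: "Phi -` A \<in> sets ((lborel \<Otimes>\<^sub>M lborel) \<Otimes>\<^sub>M (lborel \<Otimes>\<^sub>M lborel))"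
      using measurable_sets[OF Phi_measurable A'] by (simp add: space_pair_measure)
    show ?thesis
      using P A' by (subst emeasure_distr) (auto simp: emeasure_density space_pair_measure intro!: nn_integral_cong split: split_indicator)
  qed
  also have "\<dots> = (\<integral>\<^sup>+w. ennreal (cgauss_density s (fst w) * cgauss_density e (snd w)) * indicator A w \<partial>(lborel \<Otimes>\<^sub>M lborel))"
    by (rule nn4[symmetric, OF _ s e]) simp
  also have "\<dots> = emeasure (density (lborel \<Otimes>\<^sub>M lborel) (\<lambda>w. ennreal (cgauss_density s (fst w) * cgauss_density e (snd w)))) A"
    using A' by (subst emeasure_density) auto
  finally show "emeasure (density (lborel \<Otimes>\<^sub>M lborel) (\<lambda>w. ennreal (cgauss_density s (fst w) * cgauss_density e (snd w)))) A =
    emeasure (distr (density ((lborel \<Otimes>\<^sub>M lborel) \<Otimes>\<^sub>M (lborel \<Otimes>\<^sub>M lborel)) (\<lambda>v. ennreal (D2 s e (fst v) * D2 s e (snd v)))) (lborel \<Otimes>\<^sub>M lborel) Phi) A" ..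
qed simp

lemma Phi_simps[simp]: "Re (fst (Phi v)) = fst (fst v)" "Re (snd (Phi v)) = snd (fst v)"
  "Im (fst (Phi v)) = fst (snd v)" "Im (snd (Phi v)) = snd (snd v)"
  by (simp_all add: Phi_def)

lemma int4:
  fixes G1 G2 :: "real \<times> real \<Rightarrow> real"
  assumes s: "0 < s" and e: "0 < e"
    and G1[measurable]: "G1 \<in> borel_measurable (lborel \<Otimes>\<^sub>M lborel)"
    and G2[measurable]: "G2 \<in> borel_measurable (lborel \<Otimes>\<^sub>M lborel)"
    and i1: "integrable (lborel \<Otimes>\<^sub>M lborel) (\<lambda>a. D2 s e a * G1 a)"
    and i2: "integrable (lborel \<Otimes>\<^sub>M lborel) (\<lambda>a. D2 s e a * G2 a)"
  defines "H \<equiv> (\<lambda>w. G1 (Re (fst w), Re (snd w)) * G2 (Im (fst w), Im (snd w)))"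
  shows "integrable (lborel \<Otimes>\<^sub>M lborel) (\<lambda>w. (cgauss_density s (fst w) * cgauss_density e (snd w)) * H w)"
    and "(\<integral>w. (cgauss_density s (fst w) * cgauss_density e (snd w)) * H w \<partial>(lborel \<Otimes>\<^sub>M lborel))
         = (\<integral>a. D2 s e a * G1 a \<partial>(lborel \<Otimes>\<^sub>M lborel)) * (\<integral>a. D2 s e a * G2 a \<partial>(lborel \<Otimes>\<^sub>M lborel))"
proof -
  have Hm[measurable]: "H \<in> borel_measurable (lborel \<Otimes>\<^sub>M lborel)"
    unfolding H_def by measurable
  have cgm[measurable]: "(\<lambda>w. cgauss_density s (fst w) * cgauss_density e (snd w)) \<in> borel_measurable (lborel \<Otimes>\<^sub>M lborel :: (complex \<times> complex) measure)"
    by measurable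
  have cg_nn: "AE w in (lborel \<Otimes>\<^sub>M lborel :: (complex \<times> complex) measure). 0 \<le> cgauss_density s (fst w) * cgauss_density e (snd w)"
    using s e by (auto simp: cgauss_density_def)
  have D_nn: "AE v in ((lborel \<Otimes>\<^sub>M lborel) \<Otimes>\<^sub>M (lborel \<Otimes>\<^sub>M lborel)). 0 \<le> D2 s e (fst v) * D2 s e (snd v)"
    using s e by auto
  have HPhi: "H (Phi v) = G1 (fst v) * G2 (snd v)" for v
    by (simp add: H_def)
  have eqf: "(\<lambda>v. D2 s e (fst v) * D2 s e (snd v) * H (Phi v)) = (\<lambda>v. (D2 s e (fst v) * G1 (fst v)) * (D2 s e (snd v) * G2 (snd v)))"
    by (auto simp: HPhi fun_eq_iff ac_simps)
  have iprod: "integrable ((lborel \<Otimes>\<^sub>M lborel) \<Otimes>\<^sub>M (lborel \<Otimes>\<^sub>M lborel)) (\<lambda>v. D2 s e (fst v) * D2 s e (snd v) * H (Phi v))"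
    unfolding eqf by (rule pair_sigma_finite.integrable_prod_mult[OF psf_L22 i1 i2])
  have "integrable (lborel \<Otimes>\<^sub>M lborel) (\<lambda>w. (cgauss_density s (fst w) * cgauss_density e (snd w)) *\<^sub>R H w)
     \<longleftrightarrow> integrable (density (lborel \<Otimes>\<^sub>M lborel) (\<lambda>w. ennreal (cgauss_density s (fst w) * cgauss_density e (snd w)))) H"
    by (rule integrable_density[symmetric]) (auto simp: cg_nn)
  also have "\<dots> \<longleftrightarrow> integrable (density ((lborel \<Otimes>\<^sub>M lborel) \<Otimes>\<^sub>M (lborel \<Otimes>\<^sub>M lborel)) (\<lambda>v. ennreal (D2 s e (fst v) * D2 s e (snd v)))) (\<lambda>v. H (Phi v))"
    by (simp add: meas4[OF s e] integrable_distr_eq)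
  also have "\<dots> \<longleftrightarrow> integrable ((lborel \<Otimes>\<^sub>M lborel) \<Otimes>\<^sub>M (lborel \<Otimes>\<^sub>M lborel)) (\<lambda>v. D2 s e (fst v) * D2 s e (snd v) * H (Phi v))"
    by (subst integrable_density) (auto simp: D_nn)
  finally show "integrable (lborel \<Otimes>\<^sub>M lborel) (\<lambda>w. (cgauss_density s (fst w) * cgauss_density e (snd w)) * H w)"
    using iprod by simp
  have "(\<integral>w. (cgauss_density s (fst w) * cgauss_density e (snd w)) * H w \<partial>(lborel \<Otimes>\<^sub>M lborel))
     = integral\<^sup>L (density (lborel \<Otimes>\<^sub>M lborel) (\<lambda>w. ennreal (cgauss_density s (fst w) * cgauss_density e (snd w)))) H"
    by (subst integral_density) (auto simp: cg_nn)
  also have "\<dots> = integral\<^sup>L (density ((lborel \<Otimes>\<^sub>M lborel) \<Otimes>\<^sub>M (lborel \<Otimes>\<^sub>M lborel)) (\<lambda>v. ennreal (D2 s e (fst v) * D2 s e (snd v)))) (\<lambda>v. H (Phi v))"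
    by (simp add: meas4[OF s e] integral_distr)
  also have "\<dots> = (\<integral>v. D2 s e (fst v) * D2 s e (snd v) * H (Phi v) \<partial>((lborel \<Otimes>\<^sub>M lborel) \<Otimes>\<^sub>M (lborel \<Otimes>\<^sub>M lborel)))"
    by (subst integral_density) (auto simp: D_nn)
  also have "\<dots> = (\<integral>a. D2 s e a * G1 a \<partial>(lborel \<Otimes>\<^sub>M lborel)) * (\<integral>a. D2 s e a * G2 a \<partial>(lborel \<Otimes>\<^sub>M lborel))"
    unfolding eqf by (rule pair_sigma_finite.integral_prod_mult[OF psf_L22 i1 i2])
  finally show "(\<integral>w. (cgauss_density s (fst w) * cgauss_density e (snd w)) * H w \<partial>(lborel \<Otimes>\<^sub>M lborel))
         = (\<integral>a. D2 s e a * G1 a \<partial>(lborel \<Otimes>\<^sub>M lborel)) * (\<integral>a. D2 s e a * G2 a \<partial>(lborel \<Otimes>\<^sub>M lborel))" .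
qed

lemma gn_normal: "0 < v \<Longrightarrow> gn v x = normal_density 0 (sqrt (v/2)) x"
  by (simp add: gn_def normal_density_def real_sqrt_mult[symmetric])

lemma gn_1: assumes "0 < v" shows "integrable lborel (gn v)" "(\<integral>x. gn v x \<partial>lborel) = 1"
proof -
  have "gn v = normal_density 0 (sqrt (v/2))" by (rule ext) (simp add: gn_normal assms)
  then show "integrable lborel (gn v)" "(\<integral>x. gn v x \<partial>lborel) = 1" using assms by simp_all
qed

lemma gn_x2: assumes v: "0 < v"
  shows "integrable lborel (\<lambda>x. gn v x * x\<^sup>2)" "(\<integral>x. gn v x * x\<^sup>2 \<partial>lborel) = v / 2"
proof -
  have "sqrt (v/2) > 0" using v by simp
  from normal_moment_even[OF this, of 0 1]
  have "has_bochner_integral lborel (\<lambda>x. gn v x * x\<^sup>2) (v/2)"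
    using v by (simp add: gn_normal)
  then show "integrable lborel (\<lambda>x. gn v x * x\<^sup>2)" "(\<integral>x. gn v x * x\<^sup>2 \<partial>lborel) = v / 2"
    by (auto intro: integrable.intros dest: has_bochner_integral_integral_eq)
qed

lemma gn_x: assumes v: "0 < v"
  shows "integrable lborel (\<lambda>x. gn v x * x)" "(\<integral>x. gn v x * x \<partial>lborel) = 0"
proof -
  have "sqrt (v/2) > 0" using v by simp
  from normal_moment_nz_1[OF this, of 0]
  have "has_bochner_integral lborel (\<lambda>x. gn v x * x) 0"
    using v by (simp add: gn_normal)
  then show "integrable lborel (\<lambda>x. gn v x * x)" "(\<integral>x. gn v x * x \<partial>lborel) = 0"
    by (auto intro: integrable.intros dest: has_bochner_integral_integral_eq)
qed

lemma D2_base_int: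
  assumes s: "0 < s" and e: "0 < e"
  shows "integrable (lborel \<Otimes>\<^sub>M lborel) (\<lambda>a. D2 s e a * (1 + (fst a)\<^sup>2))"
proof -
  have "integrable lborel (\<lambda>x. gn s x * (1 + x\<^sup>2))"
    using gn_1[OF s] gn_x2[OF s] by (simp add: distrib_left)
  from lborel_pair.integrable_prod_mult[OF this gn_1(1)[OF e]]
  show ?thesis by (simp add: D2_def ac_simps)
qed

lemma D2_int:
  assumes s: "0 < s" and e: "0 < e" and G[measurable]: "G \<in> borel_measurable (lborel \<Otimes>\<^sub>M lborel)"
    and bnd: "\<And>a. \<bar>G a\<bar> \<le> 1 + (fst a)\<^sup>2"
  shows "integrable (lborel \<Otimes>\<^sub>M lborel) (\<lambda>a. D2 s e a * G a)"
proof (rule Bochner_Integration.integrable_bound[OF D2_base_int[OF s e]])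
  show "AE a in lborel \<Otimes>\<^sub>M lborel. norm (D2 s e a * G a) \<le> norm (D2 s e a * (1 + (fst a)\<^sup>2))"
    using s e bnd by (auto simp: abs_mult intro!: mult_left_mono)
qed simp

lemma D2_int_1: assumes s: "0 < s" and e: "0 < e"
  shows "(\<integral>a. D2 s e a * 1 \<partial>(lborel \<Otimes>\<^sub>M lborel)) = 1"
  using lborel_pair.integral_prod_mult[OF gn_1(1)[OF s] gn_1(1)[OF e]] gn_1[OF s] gn_1[OF e]
  by (simp add: D2_def)

lemma D2_int_x2: assumes s: "0 < s" and e: "0 < e"
  shows "(\<integral>a. D2 s e a * (fst a)\<^sup>2 \<partial>(lborel \<Otimes>\<^sub>M lborel)) = s / 2"
  using lborel_pair.integral_prod_mult[OF gn_x2(1)[OF s] gn_1(1)[OF e]] gn_x2[OF s] gn_1[OF e]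
  by (simp add: D2_def ac_simps)

lemma gn_even[simp]: "gn v (- x) = gn v x"
  by (simp add: gn_def)

lemma gn_J:
  assumes s: "0 < s"
  shows "(\<integral>x. gn s x * x * (if c < x then 1 else 0) \<partial>lborel) = s / 2 * gn s c"
proof -
  let ?F = "\<lambda>x. - (s / 2) * gn s x"
  have "(\<integral>x. gn s x * x * (if c < x then 1 else 0) \<partial>lborel) = (LBINT x=ereal c..\<infinity>. gn s x * x)"
    by (auto simp: interval_lebesgue_integral_def set_lebesgue_integral_def indicator_def
        intro!: Bochner_Integration.integral_cong)
  also have "\<dots> = 0 - ?F c"
  proof (rule interval_integral_FTC_integrable)
    show "ereal c < \<infinity>" by simp
    fix x :: real
    show "(?F has_vector_derivative gn s x * x) (at x)"
      unfolding gn_def has_real_derivative_iff_has_vector_derivative[symmetric]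
      using s by (auto intro!: derivative_eq_intros simp: field_simps power2_eq_square)
    show "isCont (\<lambda>x. gn s x * x) x"
      unfolding gn_def using s by (intro continuous_intros) auto
  next
    show "set_integrable lborel (einterval (ereal c) \<infinity>) (\<lambda>x. gn s x * x)"
      unfolding set_integrable_def
      by (rule integrable_mult_indicator) (auto simp: gn_x[OF s])
    show "((?F \<circ> real_of_ereal) \<longlongrightarrow> ?F c) (at_right (ereal c))"
      unfolding ereal_tendsto_simps gn_def using s by (intro tendsto_intros) auto
    have "((\<lambda>x. exp (- (x\<^sup>2) / s)) \<longlongrightarrow> 0) at_top"
      using s by real_asymp
    then have "((\<lambda>x. - (s / 2) * (exp (- (x\<^sup>2) / s) / sqrt (pi * s))) \<longlongrightarrow> - (s/2) * (0 / sqrt (pi * s))) at_top"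
      using s by (intro tendsto_intros) auto
    then show "((?F \<circ> real_of_ereal) \<longlongrightarrow> 0) (at_left \<infinity>)"
      unfolding ereal_tendsto_simps gn_def by simp
  qed
  finally show ?thesis by simp
qed

lemma gn_prod_int:
  assumes s: "0 < s" and e: "0 < e"
  shows "(\<integral>u. gn e u * gn s u \<partial>lborel) = 1 / sqrt (pi * (s + e))"
proof -
  define v where "v = s * e / (s + e)"
  have v: "0 < v" using s e by (simp add: v_def)
  have sq: "sqrt (pi * e) * sqrt (pi * s) = sqrt (pi * (s + e)) * sqrt (pi * v)"
    unfolding real_sqrt_mult[symmetric] v_def using s e by (simp add: field_simps)
  have ex: "exp (- (u\<^sup>2) / e) * exp (- (u\<^sup>2) / s) = exp (- (u\<^sup>2) / v)" for u
    unfolding mult_exp_exp v_def using s e by (simp add: field_simps)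
  have "gn e u * gn s u = 1 / sqrt (pi * (s + e)) * gn v u" for u
  proof -
    have "gn e u * gn s u = exp (- (u\<^sup>2) / v) / (sqrt (pi * e) * sqrt (pi * s))"
      unfolding gn_def ex[symmetric] by simp
    also have "\<dots> = 1 / sqrt (pi * (s + e)) * gn v u"
      unfolding sq gn_def by simp
    finally show ?thesis .
  qed
  then have "(\<integral>u. gn e u * gn s u \<partial>lborel) = (\<integral>u. 1 / sqrt (pi * (s + e)) * gn v u \<partial>lborel)"
    by simp
  also have "\<dots> = 1 / sqrt (pi * (s + e))"
    using gn_1[OF v] by simp
  finally show ?thesis .
qed

lemma D2_snd:
  assumes s: "0 < s" and e: "0 < e" and G[measurable]: "G \<in> borel_measurable (lborel \<Otimes>\<^sub>M lborel)"
    and i: "integrable (lborel \<Otimes>\<^sub>M lborel) (\<lambda>a. D2 s e a * G a)"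
  shows "(\<integral>a. D2 s e a * G a \<partial>(lborel \<Otimes>\<^sub>M lborel)) = (\<integral>u. gn e u * (\<integral>x. gn s x * G (x, u) \<partial>lborel) \<partial>lborel)"
proof -
  have i': "integrable (lborel \<Otimes>\<^sub>M lborel) (case_prod (\<lambda>x u. D2 s e (x, u) * G (x, u)))"
    using i by (simp add: case_prod_beta')
  have "(\<integral>a. D2 s e a * G a \<partial>(lborel \<Otimes>\<^sub>M lborel)) = (\<integral>u. \<integral>x. D2 s e (x, u) * G (x, u) \<partial>lborel \<partial>lborel)"
    using lborel_pair.integral_snd[OF i'] by (simp add: case_prod_beta')
  also have "\<dots> = (\<integral>u. gn e u * (\<integral>x. gn s x * G (x, u) \<partial>lborel) \<partial>lborel)"
  proof (rule Bochner_Integration.integral_cong[OF refl])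
    fix u
    have "(\<lambda>x. D2 s e (x, u) * G (x, u)) = (\<lambda>x. gn e u * (gn s x * G (x, u)))"
      by (auto simp: D2_def fun_eq_iff)
    then show "(\<integral>x. D2 s e (x, u) * G (x, u) \<partial>lborel) = gn e u * (\<integral>x. gn s x * G (x, u) \<partial>lborel)"
      by simp
  qed
  finally show ?thesis .
qed

definition Sp :: "(real \<times> real) set" where "Sp = {a. 0 < fst a + snd a}"
definition Sm :: "(real \<times> real) set" where "Sm = {a. fst a + snd a < 0}"

lemma Sp_sets[measurable]: "Sp \<in> sets (lborel \<Otimes>\<^sub>M lborel)"
proof -
  have "Sp = {a \<in> space (lborel \<Otimes>\<^sub>M lborel). 0 < fst a + snd a}" by (auto simp: Sp_def space_pair_measure)
  also have "\<dots> \<in> sets (lborel \<Otimes>\<^sub>M lborel)" by measurable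
  finally show ?thesis .
qed
lemma Sm_sets[measurable]: "Sm \<in> sets (lborel \<Otimes>\<^sub>M lborel)"
proof -
  have "Sm = {a \<in> space (lborel \<Otimes>\<^sub>M lborel). fst a + snd a < 0}" by (auto simp: Sm_def space_pair_measure)
  also have "\<dots> \<in> sets (lborel \<Otimes>\<^sub>M lborel)" by measurable
  finally show ?thesis .
qed

lemma inner_sum:
  assumes s: "0 < s"
  shows "(\<integral>x. gn s x * (indicator Sp (x, u) + indicator Sm (x, u)) \<partial>lborel) = 1"
    and "(\<integral>x. gn s x * (x * indicator Sp (x, u) + x * indicator Sm (x, u)) \<partial>lborel) = 0"
proof -
  have ae: "AE x in lborel. x \<noteq> - u" by (rule AE_lborel_singleton)
  have "(\<integral>x. gn s x * (indicator Sp (x, u) + indicator Sm (x, u)) \<partial>lborel) = (\<integral>x. gn s x \<partial>lborel)"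
    by (rule integral_cong_AE) (use ae in \<open>auto simp: Sp_def Sm_def indicator_def\<close>)
  then show "(\<integral>x. gn s x * (indicator Sp (x, u) + indicator Sm (x, u)) \<partial>lborel) = 1"
    using gn_1[OF s] by simp
  have "(\<integral>x. gn s x * (x * indicator Sp (x, u) + x * indicator Sm (x, u)) \<partial>lborel) = (\<integral>x. gn s x * x \<partial>lborel)"
    by (rule integral_cong_AE) (use ae in \<open>auto simp: Sp_def Sm_def indicator_def\<close>)
  then show "(\<integral>x. gn s x * (x * indicator Sp (x, u) + x * indicator Sm (x, u)) \<partial>lborel) = 0"
    using gn_x[OF s] by simp
qed

lemma Ip_Im:
  "(\<integral>x. gn s x * indicator Sm (x, u) \<partial>lborel) = (\<integral>x. gn s x * indicator Sp (x, - u) \<partial>lborel)"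
  by (subst lborel_integral_real_affine[where c="-1" and t=0, of "\<lambda>x. gn s x * indicator Sp (x, - u)"])
     (auto simp: Sp_def Sm_def indicator_def intro!: Bochner_Integration.integral_cong)

lemma P_half:
  assumes s: "0 < s" and e: "0 < e"
  shows "(\<integral>a. D2 s e a * indicator Sp a \<partial>(lborel \<Otimes>\<^sub>M lborel)) = 1/2"
    and "(\<integral>a. D2 s e a * indicator Sm a \<partial>(lborel \<Otimes>\<^sub>M lborel)) = 1/2"
proof -
  have ip: "integrable (lborel \<Otimes>\<^sub>M lborel) (\<lambda>a. D2 s e a * indicator Sp a)"
    by (rule D2_int[OF s e]) (auto simp: indicator_def)
  have im: "integrable (lborel \<Otimes>\<^sub>M lborel) (\<lambda>a. D2 s e a * indicator Sm a)"
    by (rule D2_int[OF s e]) (auto simp: indicator_def)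
  have isum: "integrable (lborel \<Otimes>\<^sub>M lborel) (\<lambda>a. D2 s e a * (indicator Sp a + indicator Sm a))"
    by (rule D2_int[OF s e]) (auto simp: indicator_def Sp_def Sm_def)
  let ?P = "\<integral>a. D2 s e a * indicator Sp a \<partial>(lborel \<Otimes>\<^sub>M lborel)"
  let ?M = "\<integral>a. D2 s e a * indicator Sm a \<partial>(lborel \<Otimes>\<^sub>M lborel)"
  have "?P + ?M = (\<integral>a. D2 s e a * (indicator Sp a + indicator Sm a) \<partial>(lborel \<Otimes>\<^sub>M lborel))"
    using ip im by (simp add: distrib_left)
  also have "\<dots> = (\<integral>u. gn e u * 1 \<partial>lborel)"
    by (subst D2_snd[OF s e _ isum]) (auto simp: inner_sum(1)[OF s])
  also have "\<dots> = 1" using gn_1[OF e] by simp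
  finally have sum: "?P + ?M = 1" .
  have "?M = (\<integral>u. gn e u * (\<integral>x. gn s x * indicator Sp (x, - u) \<partial>lborel) \<partial>lborel)"
    by (subst D2_snd[OF s e _ im]) (auto simp: Ip_Im)
  also have "\<dots> = (\<integral>u. gn e u * (\<integral>x. gn s x * indicator Sp (x, u) \<partial>lborel) \<partial>lborel)"
    by (subst lborel_integral_real_affine[where c="-1" and t=0]) auto
  also have "\<dots> = ?P"
    by (subst D2_snd[OF s e _ ip]) auto
  finally have "?M = ?P" .
  with sum show "?P = 1/2" "?M = 1/2" by auto
qed

lemma Q_val:
  assumes s: "0 < s" and e: "0 < e"
  shows "(\<integral>a. D2 s e a * (fst a * indicator Sp a) \<partial>(lborel \<Otimes>\<^sub>M lborel)) = s / (2 * sqrt (pi * (s + e)))"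
    and "(\<integral>a. D2 s e a * (fst a * indicator Sm a) \<partial>(lborel \<Otimes>\<^sub>M lborel)) = - (s / (2 * sqrt (pi * (s + e))))"
proof -
  have bnd: "\<bar>x\<bar> \<le> 1 + x\<^sup>2" for x :: real
  proof -
    have "0 \<le> (\<bar>x\<bar> - 1)\<^sup>2" by simp
    then show ?thesis by (simp add: power2_eq_square algebra_simps abs_mult_self_eq)
  qed
  have ip: "integrable (lborel \<Otimes>\<^sub>M lborel) (\<lambda>a. D2 s e a * (fst a * indicator Sp a))"
    by (rule D2_int[OF s e]) (auto simp: indicator_def bnd)
  have im: "integrable (lborel \<Otimes>\<^sub>M lborel) (\<lambda>a. D2 s e a * (fst a * indicator Sm a))"
    by (rule D2_int[OF s e]) (auto simp: indicator_def bnd)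
  have isum: "integrable (lborel \<Otimes>\<^sub>M lborel) (\<lambda>a. D2 s e a * (fst a * indicator Sp a + fst a * indicator Sm a))"
    by (rule D2_int[OF s e]) (auto simp: indicator_def bnd Sp_def Sm_def)
  let ?P = "\<integral>a. D2 s e a * (fst a * indicator Sp a) \<partial>(lborel \<Otimes>\<^sub>M lborel)"
  let ?M = "\<integral>a. D2 s e a * (fst a * indicator Sm a) \<partial>(lborel \<Otimes>\<^sub>M lborel)"
  have "?P + ?M = (\<integral>a. D2 s e a * (fst a * indicator Sp a + fst a * indicator Sm a) \<partial>(lborel \<Otimes>\<^sub>M lborel))"
    using ip im by (simp add: distrib_left)
  also have "\<dots> = (\<integral>u. gn e u * 0 \<partial>lborel)"
    by (subst D2_snd[OF s e _ isum]) (auto simp: inner_sum(2)[OF s])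
  finally have sum: "?P + ?M = 0" by simp
  have J: "(\<integral>x. gn s x * (x * indicator Sp (x, u)) \<partial>lborel) = s / 2 * gn s u" for u
  proof -
    have "(\<integral>x. gn s x * (x * indicator Sp (x, u)) \<partial>lborel) = (\<integral>x. gn s x * x * (if - u < x then 1 else 0) \<partial>lborel)"
      by (auto simp: Sp_def indicator_def intro!: Bochner_Integration.integral_cong)
    also have "\<dots> = s / 2 * gn s (- u)" by (rule gn_J[OF s])
    finally show ?thesis by simp
  qed
  have "?P = (\<integral>u. gn e u * (s / 2 * gn s u) \<partial>lborel)"
    by (subst D2_snd[OF s e _ ip]) (auto simp: J)
  also have "\<dots> = s / 2 * (\<integral>u. gn e u * gn s u \<partial>lborel)"
    by (simp add: ac_simps)
  also have "\<dots> = s / (2 * sqrt (pi * (s + e)))"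
    by (simp add: gn_prod_int[OF s e])
  finally show "?P = s / (2 * sqrt (pi * (s + e)))" .
  with sum show "?M = - (s / (2 * sqrt (pi * (s + e))))" by simp
qed

lemma cmod_diff_sq: "(cmod (a - c))\<^sup>2 = (cmod a)\<^sup>2 + (cmod c)\<^sup>2 - 2 * Re (cnj c * a)"
  unfolding cmod_power2 by (simp add: power2_eq_square algebra_simps)

lemma term_alg:
  fixes E :: complex and P :: real
  shows "(cmod (E / complex_of_real P))\<^sup>2 * P - 2 * Re (cnj (E / complex_of_real P) * E) = - ((cmod E)\<^sup>2 / P)"
proof (cases "P = 0")
  case True then show ?thesis by simp
next
  case False
  have "cnj E * E = complex_of_real ((cmod E)\<^sup>2)"
    unfolding cmod_power2 by (simp add: complex_eq_iff power2_eq_square)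
  note eq = this
  have "cnj (E / complex_of_real P) * E = (cnj E * E) / complex_of_real P"
    by simp
  also have "\<dots> = complex_of_real ((cmod E)\<^sup>2 / P)"
    by (simp only: eq of_real_divide)
  finally have "Re (cnj (E / complex_of_real P) * E) = (cmod E)\<^sup>2 / P"
    by (simp only: Re_complex_of_real)
  moreover have "(cmod (E / complex_of_real P))\<^sup>2 * P = (cmod E)\<^sup>2 / P"
    using False by (simp add: norm_divide power2_eq_square field_simps)
  ultimately show ?thesis by linarith
qed

lemma (in prob_space) mse_formula:
  fixes X :: "'a \<Rightarrow> complex" and T :: "'a \<Rightarrow> 'i"
  assumes X[measurable]: "X \<in> borel_measurable M"
    and X2: "integrable M (\<lambda>x. (cmod (X x))\<^sup>2)"
    and F: "finite F" and TF: "\<And>x. x \<in> space M \<Longrightarrow> T x \<in> F"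
    and Tm: "\<And>q. q \<in> F \<Longrightarrow> {x\<in>space M. T x = q} \<in> events"
  shows "(\<integral>w. (cmod (X w - cond_mean_disc M X T w))\<^sup>2 \<partial>M)
       = (\<integral>w. (cmod (X w))\<^sup>2 \<partial>M)
         - (\<Sum>q\<in>F. (cmod (\<integral>x. indicator {x\<in>space M. T x = q} x *\<^sub>R X x \<partial>M))\<^sup>2 / measure M {x\<in>space M. T x = q})"
proof -
  define A where "A q = {x\<in>space M. T x = q}" for q
  define Eq where "Eq q = (\<integral>x. indicator (A q) x *\<^sub>R X x \<partial>M)" for q
  define P where "P q = measure M (A q)" for q
  define v where "v q = Eq q / complex_of_real (P q)" for q
  have Am[measurable]: "q \<in> F \<Longrightarrow> A q \<in> sets M" for q using Tm by (simp add: A_def)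
  have Xi: "integrable M X"
  proof (rule Bochner_Integration.integrable_bound[of _ "\<lambda>x. 1 + (cmod (X x))\<^sup>2"])
    show "integrable M (\<lambda>x. 1 + (cmod (X x))\<^sup>2)" using X2 by simp
    show "AE x in M. norm (X x) \<le> norm (1 + (cmod (X x))\<^sup>2)"
    proof (rule AE_I2)
      fix x
      have "0 \<le> (cmod (X x) - 1)\<^sup>2" by simp
      then show "norm (X x) \<le> norm (1 + (cmod (X x))\<^sup>2)"
        by (simp add: power2_eq_square algebra_simps) (use norm_ge_zero[of "X x"] in linarith)
    qed
  qed simp
  have cm: "cond_mean_disc M X T w = v (T w)" if "w \<in> space M" for w
    by (simp add: cond_mean_disc_def Let_def v_def Eq_def P_def A_def)
  have pw: "(cmod (X w - cond_mean_disc M X T w))\<^sup>2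
     = (cmod (X w))\<^sup>2 + (\<Sum>q\<in>F. indicator (A q) w * ((cmod (v q))\<^sup>2 - 2 * Re (cnj (v q) * X w)))"
    if w: "w \<in> space M" for w
  proof -
    have ind: "indicator (A q) w = (if q = T w then 1 else 0 :: real)" for q
      using w by (auto simp: A_def indicator_def)
    have "(\<Sum>q\<in>F. indicator (A q) w * ((cmod (v q))\<^sup>2 - 2 * Re (cnj (v q) * X w)))
       = (cmod (v (T w)))\<^sup>2 - 2 * Re (cnj (v (T w)) * X w)"
    proof -
      have "(\<Sum>q\<in>F. indicator (A q) w * ((cmod (v q))\<^sup>2 - 2 * Re (cnj (v q) * X w)))
         = (\<Sum>q\<in>F. if q = T w then (cmod (v q))\<^sup>2 - 2 * Re (cnj (v q) * X w) else 0)"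
        by (rule sum.cong) (auto simp: ind)
      also have "\<dots> = (cmod (v (T w)))\<^sup>2 - 2 * Re (cnj (v (T w)) * X w)"
        using TF[OF w] F by (simp add: sum.delta)
      finally show ?thesis .
    qed
    then show ?thesis using cm[OF w] by (simp add: cmod_diff_sq)
  qed
  have int_term: "integrable M (\<lambda>w. indicator (A q) w * ((cmod (v q))\<^sup>2 - 2 * Re (cnj (v q) * X w)))"
    if q: "q \<in> F" for q
  proof -
    have "integrable M (\<lambda>w. cnj (v q) * X w)" using Xi by simp
    then have "integrable M (\<lambda>w. Re (cnj (v q) * X w))" by (rule integrable_Re)
    then have "integrable M (\<lambda>w. (cmod (v q))\<^sup>2 - 2 * Re (cnj (v q) * X w))"
      by (intro Bochner_Integration.integrable_diff integrable_const integrable_mult_right)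
    then have "integrable M (\<lambda>w. ((cmod (v q))\<^sup>2 - 2 * Re (cnj (v q) * X w)) * indicator (A q) w)"
      using Am[OF q] by (rule integrable_real_mult_indicator[rotated])
    then show ?thesis by (simp add: mult.commute)
  qed
  have val_term: "(\<integral>w. indicator (A q) w * ((cmod (v q))\<^sup>2 - 2 * Re (cnj (v q) * X w)) \<partial>M)
     = - ((cmod (Eq q))\<^sup>2 / P q)" if q: "q \<in> F" for q
  proof -
    have iA: "integrable M (\<lambda>w. indicator (A q) w *\<^sub>R X w)"
      using Am[OF q] Xi by (rule integrable_mult_indicator)
    have "(\<integral>w. indicator (A q) w * ((cmod (v q))\<^sup>2 - 2 * Re (cnj (v q) * X w)) \<partial>M)
       = (\<integral>w. indicator (A q) w * (cmod (v q))\<^sup>2 - 2 * Re (cnj (v q) * (indicator (A q) w *\<^sub>R X w)) \<partial>M)"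
      by (intro Bochner_Integration.integral_cong) (auto simp: indicator_def)
    also have "\<dots> = (cmod (v q))\<^sup>2 * P q - 2 * Re (cnj (v q) * Eq q)"
    proof -
      have i1: "integrable M (\<lambda>w. indicator (A q) w * (cmod (v q))\<^sup>2)"
        using Am[OF q] by (intro integrable_mult_left integrable_real_indicator) (auto simp: emeasure_eq_measure)
      have i2c: "integrable M (\<lambda>w. cnj (v q) * (indicator (A q) w *\<^sub>R X w))"
        using iA by (rule integrable_mult_right)
      then have i2: "integrable M (\<lambda>w. Re (cnj (v q) * (indicator (A q) w *\<^sub>R X w)))"
        by (rule integrable_Re)
      have e1: "(\<integral>w. indicator (A q) w * (cmod (v q))\<^sup>2 \<partial>M) = P q * (cmod (v q))\<^sup>2"
        using Am[OF q] by (simp add: P_def)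
      have e2: "(\<integral>w. Re (cnj (v q) * (indicator (A q) w *\<^sub>R X w)) \<partial>M) = Re (cnj (v q) * Eq q)"
        by (simp only: integral_Re[OF i2c] integral_mult_right_zero Eq_def)
      have d: "(\<integral>w. indicator (A q) w * (cmod (v q))\<^sup>2 - 2 * Re (cnj (v q) * (indicator (A q) w *\<^sub>R X w)) \<partial>M)
        = (\<integral>w. indicator (A q) w * (cmod (v q))\<^sup>2 \<partial>M) - (\<integral>w. 2 * Re (cnj (v q) * (indicator (A q) w *\<^sub>R X w)) \<partial>M)"
        by (rule Bochner_Integration.integral_diff[OF i1 integrable_mult_right[OF i2]])
      have m: "(\<integral>w. 2 * Re (cnj (v q) * (indicator (A q) w *\<^sub>R X w)) \<partial>M) = 2 * (\<integral>w. Re (cnj (v q) * (indicator (A q) w *\<^sub>R X w)) \<partial>M)"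
        by (rule integral_mult_right_zero)
      show ?thesis
        unfolding d m e1 e2 by (simp only: mult.commute)
    qed
    also have "\<dots> = - ((cmod (Eq q))\<^sup>2 / P q)"
      unfolding v_def by (rule term_alg)
    finally show ?thesis .
  qed
  have "(\<integral>w. (cmod (X w - cond_mean_disc M X T w))\<^sup>2 \<partial>M)
     = (\<integral>w. (cmod (X w))\<^sup>2 + (\<Sum>q\<in>F. indicator (A q) w * ((cmod (v q))\<^sup>2 - 2 * Re (cnj (v q) * X w))) \<partial>M)"
    by (intro Bochner_Integration.integral_cong) (auto simp: pw)
  also have "\<dots> = (\<integral>w. (cmod (X w))\<^sup>2 \<partial>M) + (\<Sum>q\<in>F. \<integral>w. indicator (A q) w * ((cmod (v q))\<^sup>2 - 2 * Re (cnj (v q) * X w)) \<partial>M)"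
    using X2 int_term by (simp add: Bochner_Integration.integral_sum)
  also have "\<dots> = (\<integral>w. (cmod (X w))\<^sup>2 \<partial>M) - (\<Sum>q\<in>F. (cmod (Eq q))\<^sup>2 / P q)"
  proof -
    have "(\<Sum>q\<in>F. \<integral>w. indicator (A q) w * ((cmod (v q))\<^sup>2 - 2 * Re (cnj (v q) * X w)) \<partial>M)
      = (\<Sum>q\<in>F. - ((cmod (Eq q))\<^sup>2 / P q))"
      by (rule sum.cong[OF refl val_term])
    then show ?thesis by (simp only: sum_negf diff_conv_add_uminus)
  qed
  finally show ?thesis by (simp add: Eq_def P_def A_def)
qed

definition sI :: "real \<Rightarrow> real \<times> real \<Rightarrow> real" where
  "sI c a = (if sgn (fst a + snd a) = c then 1 else 0)"

lemma sI_meas[measurable]: "sI c \<in> borel_measurable (lborel \<Otimes>\<^sub>M lborel)"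
  unfolding sI_def[abs_def] by measurable

lemma sI_cases: "c \<in> {-1,0,1} \<Longrightarrow> sI c a = (if c = 1 then indicator Sp a else if c = -1 then indicator Sm a else 1 - indicator Sp a - indicator Sm a)"
  by (auto simp: sI_def Sp_def Sm_def indicator_def sgn_if)

lemma D2_x: assumes s: "0 < s" and e: "0 < e"
  shows "(\<integral>a. D2 s e a * fst a \<partial>(lborel \<Otimes>\<^sub>M lborel)) = 0"
  using lborel_pair.integral_prod_mult[OF gn_x(1)[OF s] gn_1(1)[OF e]] gn_x[OF s] gn_1[OF e]
  by (simp add: D2_def ac_simps)

lemma P1: assumes s: "0 < s" and e: "0 < e" and c: "c \<in> {-1,0,1}"
  shows "(\<integral>a. D2 s e a * sI c a \<partial>(lborel \<Otimes>\<^sub>M lborel)) = \<bar>c\<bar> / 2"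
proof -
  have ip: "integrable (lborel \<Otimes>\<^sub>M lborel) (\<lambda>a. D2 s e a * indicator Sp a)"
    by (rule D2_int[OF s e]) (auto simp: indicator_def)
  have im: "integrable (lborel \<Otimes>\<^sub>M lborel) (\<lambda>a. D2 s e a * indicator Sm a)"
    by (rule D2_int[OF s e]) (auto simp: indicator_def)
  have i1: "integrable (lborel \<Otimes>\<^sub>M lborel) (\<lambda>a. D2 s e a * 1)"
    by (rule D2_int[OF s e]) auto
  have z: "(\<integral>a. D2 s e a * (1 - indicator Sp a - indicator Sm a) \<partial>(lborel \<Otimes>\<^sub>M lborel)) = 0"
  proof -
    have "(\<integral>a. D2 s e a * (1 - indicator Sp a - indicator Sm a) \<partial>(lborel \<Otimes>\<^sub>M lborel))
      = (\<integral>a. D2 s e a * 1 - D2 s e a * indicator Sp a - D2 s e a * indicator Sm a \<partial>(lborel \<Otimes>\<^sub>M lborel))"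
      by (simp add: algebra_simps)
    also have "\<dots> = (\<integral>a. D2 s e a * 1 \<partial>(lborel \<Otimes>\<^sub>M lborel)) - (\<integral>a. D2 s e a * indicator Sp a \<partial>(lborel \<Otimes>\<^sub>M lborel))
        - (\<integral>a. D2 s e a * indicator Sm a \<partial>(lborel \<Otimes>\<^sub>M lborel))"
      using ip im i1 by (simp add: Bochner_Integration.integral_diff)
    also have "\<dots> = 0" using D2_int_1[OF s e] P_half[OF s e] by simp
    finally show ?thesis .
  qed
  show ?thesis
    using c P_half[OF s e] z by (auto simp: sI_cases)
qed

lemma E1: assumes s: "0 < s" and e: "0 < e" and c: "c \<in> {-1,0,1}"
  shows "(\<integral>a. D2 s e a * (fst a * sI c a) \<partial>(lborel \<Otimes>\<^sub>M lborel)) = c * (s / (2 * sqrt (pi * (s + e))))"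
proof -
  have bnd: "\<bar>x\<bar> \<le> 1 + x\<^sup>2" for x :: real
  proof -
    have "0 \<le> (\<bar>x\<bar> - 1)\<^sup>2" by simp
    then show ?thesis by (simp add: power2_eq_square algebra_simps abs_mult_self_eq)
  qed
  have ip: "integrable (lborel \<Otimes>\<^sub>M lborel) (\<lambda>a. D2 s e a * (fst a * indicator Sp a))"
    by (rule D2_int[OF s e]) (auto simp: indicator_def bnd)
  have im: "integrable (lborel \<Otimes>\<^sub>M lborel) (\<lambda>a. D2 s e a * (fst a * indicator Sm a))"
    by (rule D2_int[OF s e]) (auto simp: indicator_def bnd)
  have i1: "integrable (lborel \<Otimes>\<^sub>M lborel) (\<lambda>a. D2 s e a * fst a)"
    by (rule D2_int[OF s e]) (auto simp: bnd)
  have z: "(\<integral>a. D2 s e a * (fst a * (1 - indicator Sp a - indicator Sm a)) \<partial>(lborel \<Otimes>\<^sub>M lborel)) = 0"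
  proof -
    have "(\<integral>a. D2 s e a * (fst a * (1 - indicator Sp a - indicator Sm a)) \<partial>(lborel \<Otimes>\<^sub>M lborel))
      = (\<integral>a. D2 s e a * fst a - D2 s e a * (fst a * indicator Sp a) - D2 s e a * (fst a * indicator Sm a) \<partial>(lborel \<Otimes>\<^sub>M lborel))"
      by (simp add: algebra_simps)
    also have "\<dots> = (\<integral>a. D2 s e a * fst a \<partial>(lborel \<Otimes>\<^sub>M lborel)) - (\<integral>a. D2 s e a * (fst a * indicator Sp a) \<partial>(lborel \<Otimes>\<^sub>M lborel))
        - (\<integral>a. D2 s e a * (fst a * indicator Sm a) \<partial>(lborel \<Otimes>\<^sub>M lborel))"
      using ip im i1 by (simp add: Bochner_Integration.integral_diff)
    also have "\<dots> = 0" using D2_x[OF s e] Q_val[OF s e] by simp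
    finally show ?thesis .
  qed
  show ?thesis
    using c Q_val[OF s e] z by (auto simp: sI_cases)
qed

locale gmm_setup = prob_space M for M :: "'a measure" +
  fixes K :: nat and p s :: "nat \<Rightarrow> real" and e :: real and h n :: "'a \<Rightarrow> complex"
  assumes p_pos: "\<forall>k<K. p k > 0"
    and p_sum: "(\<Sum>k<K. p k) = 1"
    and s_pos: "\<forall>k<K. s k > 0"
    and e_pos: "e > 0"
    and h: "distributed M lborel h (\<lambda>z. ennreal (gmm_density K p s z))"
    and n: "distributed M lborel n (\<lambda>z. ennreal (cgauss_density e z))"
    and hn: "indep_var borel h borel n"
begin

definition Dj :: "complex \<times> complex \<Rightarrow> real" where
  "Dj w = gmm_density K p s (fst w) * cgauss_density e (snd w)"

definition Ck :: "nat \<Rightarrow> complex \<times> complex \<Rightarrow> real" where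
  "Ck k w = cgauss_density (s k) (fst w) * cgauss_density e (snd w)"

lemma gmm_nonneg: "0 \<le> gmm_density K p s z"
  unfolding gmm_density_def cgauss_density_def using p_pos s_pos
  by (intro sum_nonneg) (auto intro!: mult_nonneg_nonneg divide_nonneg_pos)

lemma cg_nonneg: "0 < v \<Longrightarrow> 0 \<le> cgauss_density v z"
  by (simp add: cgauss_density_def)

lemma Dj_nonneg: "0 \<le> Dj w"
  unfolding Dj_def using gmm_nonneg cg_nonneg[OF e_pos] by simp

lemma gmm_meas[measurable]: "gmm_density K p s \<in> borel_measurable borel"
  unfolding gmm_density_def[abs_def] by measurable

lemma Dj_meas[measurable]: "Dj \<in> borel_measurable (lborel \<Otimes>\<^sub>M lborel)"
  unfolding Dj_def[abs_def] by measurable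

lemma Ck_meas[measurable]: "Ck k \<in> borel_measurable (lborel \<Otimes>\<^sub>M lborel)"
  unfolding Ck_def[abs_def] by measurable

lemma h_meas[measurable]: "h \<in> borel_measurable M"
  using distributed_measurable[OF h] by simp
lemma n_meas[measurable]: "n \<in> borel_measurable M"
  using distributed_measurable[OF n] by simp

lemma indep_l: "indep_var lborel h lborel n"
proof -
  have e1: "distr M lborel h = distr M borel h" by (rule distr_cong) auto
  have e2: "distr M lborel n = distr M borel n" by (rule distr_cong) auto
  have e3: "distr M (lborel \<Otimes>\<^sub>M lborel) (\<lambda>x. (h x, n x)) = distr M (borel \<Otimes>\<^sub>M borel) (\<lambda>x. (h x, n x))"
    by (rule distr_cong) (auto intro!: sets_pair_measure_cong)
  show ?thesis
    using hn unfolding indep_var_distribution_eq e1 e2 e3 by simp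
qed

lemma joint: "distr M (lborel \<Otimes>\<^sub>M lborel) (\<lambda>w. (h w, n w)) = density (lborel \<Otimes>\<^sub>M lborel) (\<lambda>w. ennreal (Dj w))"
proof -
  have "distributed M (lborel \<Otimes>\<^sub>M lborel) (\<lambda>x. (h x, n x)) (\<lambda>(x, y). ennreal (gmm_density K p s x) * ennreal (cgauss_density e y))"
    by (rule distributed_joint_indep[OF sigma_finite_lborel sigma_finite_lborel h n indep_l])
  then have "distr M (lborel \<Otimes>\<^sub>M lborel) (\<lambda>w. (h w, n w)) = density (lborel \<Otimes>\<^sub>M lborel) (\<lambda>(x, y). ennreal (gmm_density K p s x) * ennreal (cgauss_density e y))"
    by (simp add: distributed_def)
  also have "(\<lambda>(x, y). ennreal (gmm_density K p s x) * ennreal (cgauss_density e y)) = (\<lambda>w. ennreal (Dj w))"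
    using gmm_nonneg cg_nonneg[OF e_pos] by (auto simp: Dj_def fun_eq_iff ennreal_mult)
  finally show ?thesis .
qed

lemma hn_meas[measurable]: "(\<lambda>w. (h w, n w)) \<in> measurable M (lborel \<Otimes>\<^sub>M lborel)"
  by measurable

lemma transfer:
  fixes F :: "complex \<times> complex \<Rightarrow> real"
  assumes F[measurable]: "F \<in> borel_measurable (lborel \<Otimes>\<^sub>M lborel)"
  shows "(\<integral>w. F (h w, n w) \<partial>M) = (\<integral>w. Dj w * F w \<partial>(lborel \<Otimes>\<^sub>M lborel))"
    and "integrable M (\<lambda>w. F (h w, n w)) \<longleftrightarrow> integrable (lborel \<Otimes>\<^sub>M lborel) (\<lambda>w. Dj w * F w)"
proof -
  have "(\<integral>w. F (h w, n w) \<partial>M) = integral\<^sup>L (distr M (lborel \<Otimes>\<^sub>M lborel) (\<lambda>w. (h w, n w))) F"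
    by (rule integral_distr[symmetric]) auto
  also have "\<dots> = (\<integral>w. Dj w * F w \<partial>(lborel \<Otimes>\<^sub>M lborel))"
    unfolding joint by (subst integral_density) (auto simp: Dj_nonneg)
  finally show "(\<integral>w. F (h w, n w) \<partial>M) = (\<integral>w. Dj w * F w \<partial>(lborel \<Otimes>\<^sub>M lborel))" .
  have "integrable M (\<lambda>w. F (h w, n w)) \<longleftrightarrow> integrable (distr M (lborel \<Otimes>\<^sub>M lborel) (\<lambda>w. (h w, n w))) F"
    by (rule integrable_distr_eq[symmetric]) auto
  also have "\<dots> \<longleftrightarrow> integrable (lborel \<Otimes>\<^sub>M lborel) (\<lambda>w. Dj w * F w)"
    unfolding joint by (subst integrable_density) (auto simp: Dj_nonneg)
  finally show "integrable M (\<lambda>w. F (h w, n w)) \<longleftrightarrow> integrable (lborel \<Otimes>\<^sub>M lborel) (\<lambda>w. Dj w * F w)" .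
qed

lemma Dj_sum: "Dj w * F = (\<Sum>k<K. p k * (Ck k w * F))"
  by (simp add: Dj_def Ck_def gmm_density_def sum_distrib_right sum_distrib_left ac_simps)

lemma mixture:
  fixes F :: "complex \<times> complex \<Rightarrow> real"
  assumes F[measurable]: "F \<in> borel_measurable (lborel \<Otimes>\<^sub>M lborel)"
    and i: "\<And>k. k < K \<Longrightarrow> integrable (lborel \<Otimes>\<^sub>M lborel) (\<lambda>w. Ck k w * F w)"
  shows "integrable M (\<lambda>w. F (h w, n w))"
    and "(\<integral>w. F (h w, n w) \<partial>M) = (\<Sum>k<K. p k * (\<integral>w. Ck k w * F w \<partial>(lborel \<Otimes>\<^sub>M lborel)))"
proof -
  have eq: "(\<lambda>w. Dj w * F w) = (\<lambda>w. \<Sum>k<K. p k * (Ck k w * F w))"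
    by (rule ext) (rule Dj_sum)
  have ii: "integrable (lborel \<Otimes>\<^sub>M lborel) (\<lambda>w. Dj w * F w)"
    unfolding eq using i by (intro Bochner_Integration.integrable_sum integrable_mult_right) auto
  then show "integrable M (\<lambda>w. F (h w, n w))" using transfer(2)[OF F] by simp
  show "(\<integral>w. F (h w, n w) \<partial>M) = (\<Sum>k<K. p k * (\<integral>w. Ck k w * F w \<partial>(lborel \<Otimes>\<^sub>M lborel)))"
    unfolding transfer(1)[OF F] eq using i
    by (subst Bochner_Integration.integral_sum) (auto intro!: sum.cong)
qed

lemma sI_bnd: "\<bar>sI c a\<bar> \<le> 1 + (fst a)\<^sup>2"
  by (simp add: sI_def)

lemma fst_sI_bnd: "\<bar>fst a * sI c a\<bar> \<le> 1 + (fst a)\<^sup>2"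
proof -
  have "0 \<le> (\<bar>fst a\<bar> - 1)\<^sup>2" by simp
  then have "\<bar>fst a\<bar> \<le> 1 + (fst a)\<^sup>2" by (simp add: power2_eq_square algebra_simps abs_mult_self_eq)
  then show ?thesis by (simp add: sI_def abs_mult)
qed

lemma sk: "k < K \<Longrightarrow> 0 < s k" using s_pos by simp

lemma fst_sI_meas[measurable]: "(\<lambda>q. fst q * sI c q) \<in> borel_measurable (lborel \<Otimes>\<^sub>M lborel)"
  by measurable

lemma Q_sq:
  assumes k: "k < K"
  shows "integrable (lborel \<Otimes>\<^sub>M lborel) (\<lambda>w. Ck k w * (cmod (fst w))\<^sup>2)"
    and "(\<integral>w. Ck k w * (cmod (fst w))\<^sup>2 \<partial>(lborel \<Otimes>\<^sub>M lborel)) = s k"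
proof -
  note sk = sk[OF k]
  have i1: "integrable (lborel \<Otimes>\<^sub>M lborel) (\<lambda>a. D2 (s k) e a * (fst a)\<^sup>2)"
    by (rule D2_int[OF sk e_pos]) auto
  have i0: "integrable (lborel \<Otimes>\<^sub>M lborel) (\<lambda>a. D2 (s k) e a * 1)"
    by (rule D2_int[OF sk e_pos]) auto
  note A = int4[OF sk e_pos _ _ i1 i0] and B = int4[OF sk e_pos _ _ i0 i1]
  have eq: "(\<lambda>w. Ck k w * (cmod (fst w))\<^sup>2) = (\<lambda>w. cgauss_density (s k) (fst w) * cgauss_density e (snd w) * ((Re (fst w))\<^sup>2 * 1)
     + cgauss_density (s k) (fst w) * cgauss_density e (snd w) * (1 * (Im (fst w))\<^sup>2))"
    by (rule ext) (simp add: Ck_def cmod_power2 algebra_simps)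
  have iA: "integrable (lborel \<Otimes>\<^sub>M lborel) (\<lambda>w. cgauss_density (s k) (fst w) * cgauss_density e (snd w) * ((Re (fst w))\<^sup>2 * 1))"
    using A(1) by simp
  have iB: "integrable (lborel \<Otimes>\<^sub>M lborel) (\<lambda>w. cgauss_density (s k) (fst w) * cgauss_density e (snd w) * (1 * (Im (fst w))\<^sup>2))"
    using B(1) by simp
  show "integrable (lborel \<Otimes>\<^sub>M lborel) (\<lambda>w. Ck k w * (cmod (fst w))\<^sup>2)"
    unfolding eq using iA iB by (rule Bochner_Integration.integrable_add)
  have vA: "(\<integral>w. cgauss_density (s k) (fst w) * cgauss_density e (snd w) * ((Re (fst w))\<^sup>2 * 1) \<partial>(lborel \<Otimes>\<^sub>M lborel)) = s k / 2"
    using A(2) D2_int_1[OF sk e_pos] D2_int_x2[OF sk e_pos] by simp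
  have vB: "(\<integral>w. cgauss_density (s k) (fst w) * cgauss_density e (snd w) * (1 * (Im (fst w))\<^sup>2) \<partial>(lborel \<Otimes>\<^sub>M lborel)) = s k / 2"
    using B(2) D2_int_1[OF sk e_pos] D2_int_x2[OF sk e_pos] by simp
  show "(\<integral>w. Ck k w * (cmod (fst w))\<^sup>2 \<partial>(lborel \<Otimes>\<^sub>M lborel)) = s k"
    unfolding eq using iA iB vA vB by (simp add: Bochner_Integration.integral_add)
qed

definition mm :: "real \<Rightarrow> real" where "mm v = v / (2 * sqrt (pi * (v + e)))"

lemma Q_cell:
  assumes k: "k < K" and a: "a \<in> {-1,0,1}" and b: "b \<in> {-1,0,1}"
  shows "integrable (lborel \<Otimes>\<^sub>M lborel) (\<lambda>w. Ck k w * (sI a (Re (fst w), Re (snd w)) * sI b (Im (fst w), Im (snd w))))"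
    and "(\<integral>w. Ck k w * (sI a (Re (fst w), Re (snd w)) * sI b (Im (fst w), Im (snd w))) \<partial>(lborel \<Otimes>\<^sub>M lborel)) = \<bar>a\<bar> / 2 * (\<bar>b\<bar> / 2)"
proof -
  note sk = sk[OF k]
  have ia: "integrable (lborel \<Otimes>\<^sub>M lborel) (\<lambda>q. D2 (s k) e q * sI a q)"
    by (rule D2_int[OF sk e_pos]) (auto simp: sI_bnd)
  have ib: "integrable (lborel \<Otimes>\<^sub>M lborel) (\<lambda>q. D2 (s k) e q * sI b q)"
    by (rule D2_int[OF sk e_pos]) (auto simp: sI_bnd)
  note A = int4[OF sk e_pos _ _ ia ib]
  show "integrable (lborel \<Otimes>\<^sub>M lborel) (\<lambda>w. Ck k w * (sI a (Re (fst w), Re (snd w)) * sI b (Im (fst w), Im (snd w))))"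
    using A(1) by (simp add: Ck_def)
  show "(\<integral>w. Ck k w * (sI a (Re (fst w), Re (snd w)) * sI b (Im (fst w), Im (snd w))) \<partial>(lborel \<Otimes>\<^sub>M lborel)) = \<bar>a\<bar> / 2 * (\<bar>b\<bar> / 2)"
    using A(2) P1[OF sk e_pos a] P1[OF sk e_pos b] by (simp add: Ck_def)
qed

lemma Q_re:
  assumes k: "k < K" and a: "a \<in> {-1,0,1}" and b: "b \<in> {-1,0,1}"
  shows "integrable (lborel \<Otimes>\<^sub>M lborel) (\<lambda>w. Ck k w * ((Re (fst w) * sI a (Re (fst w), Re (snd w))) * sI b (Im (fst w), Im (snd w))))"
    and "(\<integral>w. Ck k w * ((Re (fst w) * sI a (Re (fst w), Re (snd w))) * sI b (Im (fst w), Im (snd w))) \<partial>(lborel \<Otimes>\<^sub>M lborel)) = a * mm (s k) * (\<bar>b\<bar> / 2)"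
proof -
  note sk = sk[OF k]
  have ia: "integrable (lborel \<Otimes>\<^sub>M lborel) (\<lambda>q. D2 (s k) e q * (fst q * sI a q))"
    by (rule D2_int[OF sk e_pos]) (auto simp: fst_sI_bnd)
  have ib: "integrable (lborel \<Otimes>\<^sub>M lborel) (\<lambda>q. D2 (s k) e q * sI b q)"
    by (rule D2_int[OF sk e_pos]) (auto simp: sI_bnd)
  note A = int4[OF sk e_pos _ _ ia ib]
  show "integrable (lborel \<Otimes>\<^sub>M lborel) (\<lambda>w. Ck k w * ((Re (fst w) * sI a (Re (fst w), Re (snd w))) * sI b (Im (fst w), Im (snd w))))"
    using A(1) by (simp add: Ck_def)
  show "(\<integral>w. Ck k w * ((Re (fst w) * sI a (Re (fst w), Re (snd w))) * sI b (Im (fst w), Im (snd w))) \<partial>(lborel \<Otimes>\<^sub>M lborel)) = a * mm (s k) * (\<bar>b\<bar> / 2)"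
    using A(2) E1[OF sk e_pos a] P1[OF sk e_pos b] by (simp add: Ck_def mm_def)
qed

lemma Q_im:
  assumes k: "k < K" and a: "a \<in> {-1,0,1}" and b: "b \<in> {-1,0,1}"
  shows "integrable (lborel \<Otimes>\<^sub>M lborel) (\<lambda>w. Ck k w * (sI a (Re (fst w), Re (snd w)) * (Im (fst w) * sI b (Im (fst w), Im (snd w)))))"
    and "(\<integral>w. Ck k w * (sI a (Re (fst w), Re (snd w)) * (Im (fst w) * sI b (Im (fst w), Im (snd w)))) \<partial>(lborel \<Otimes>\<^sub>M lborel)) = \<bar>a\<bar> / 2 * (b * mm (s k))"
proof -
  note sk = sk[OF k]
  have ia: "integrable (lborel \<Otimes>\<^sub>M lborel) (\<lambda>q. D2 (s k) e q * sI a q)"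
    by (rule D2_int[OF sk e_pos]) (auto simp: sI_bnd)
  have ib: "integrable (lborel \<Otimes>\<^sub>M lborel) (\<lambda>q. D2 (s k) e q * (fst q * sI b q))"
    by (rule D2_int[OF sk e_pos]) (auto simp: fst_sI_bnd)
  note A = int4[OF sk e_pos _ _ ia ib]
  show "integrable (lborel \<Otimes>\<^sub>M lborel) (\<lambda>w. Ck k w * (sI a (Re (fst w), Re (snd w)) * (Im (fst w) * sI b (Im (fst w), Im (snd w)))))"
    using A(1) by (simp add: Ck_def)
  show "(\<integral>w. Ck k w * (sI a (Re (fst w), Re (snd w)) * (Im (fst w) * sI b (Im (fst w), Im (snd w)))) \<partial>(lborel \<Otimes>\<^sub>M lborel)) = \<bar>a\<bar> / 2 * (b * mm (s k))"
    using A(2) E1[OF sk e_pos b] P1[OF sk e_pos a] by (simp add: Ck_def mm_def)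
qed

definition T :: "'a \<Rightarrow> real \<times> real" where
  "T w = (sgn (Re (h w + n w)), sgn (Im (h w + n w)))"

definition Acell :: "real \<times> real \<Rightarrow> 'a set" where
  "Acell q = {w \<in> space M. T w = q}"

definition Mv :: real where "Mv = (\<Sum>k<K. p k * mm (s k))"

lemma Acell_sets[measurable]: "Acell q \<in> sets M"
proof -
  have "Acell q = {w \<in> space M. sgn (Re (h w + n w)) = fst q \<and> sgn (Im (h w + n w)) = snd q}"
    by (auto simp: Acell_def T_def)
  also have "\<dots> \<in> sets M" by measurable
  finally show ?thesis .
qed

lemma ind_cell: "w \<in> space M \<Longrightarrow> indicator (Acell (a, b)) w = sI a (Re (h w), Re (n w)) * sI b (Im (h w), Im (n w))"
  by (simp add: Acell_def T_def indicator_def sI_def)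

lemma M_sq: "integrable M (\<lambda>w. (cmod (h w))\<^sup>2)" "(\<integral>w. (cmod (h w))\<^sup>2 \<partial>M) = (\<Sum>k<K. p k * s k)"
  using mixture[of "\<lambda>w. (cmod (fst w))\<^sup>2", OF _ Q_sq(1)] Q_sq(2) by simp_all

lemma h_int: "integrable M h"
proof (rule Bochner_Integration.integrable_bound[of _ "\<lambda>x. 1 + (cmod (h x))\<^sup>2"])
  show "integrable M (\<lambda>x. 1 + (cmod (h x))\<^sup>2)" using M_sq(1) by simp
  show "AE x in M. norm (h x) \<le> norm (1 + (cmod (h x))\<^sup>2)"
  proof (rule AE_I2)
    fix x
    have "0 \<le> (cmod (h x) - 1)\<^sup>2" by simp
    then show "norm (h x) \<le> norm (1 + (cmod (h x))\<^sup>2)"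
      by (simp add: power2_eq_square algebra_simps) (use norm_ge_zero[of "h x"] in linarith)
  qed
qed simp

lemma M_P:
  assumes a: "a \<in> {-1,0,1}" and b: "b \<in> {-1,0,1}"
  shows "measure M (Acell (a, b)) = \<bar>a\<bar> * \<bar>b\<bar> / 4"
proof -
  have "measure M (Acell (a, b)) = (\<integral>w. indicator (Acell (a, b)) w \<partial>M)"
    by simp
  also have "\<dots> = (\<integral>w. sI a (Re (fst (h w, n w)), Re (snd (h w, n w))) * sI b (Im (fst (h w, n w)), Im (snd (h w, n w))) \<partial>M)"
    by (intro Bochner_Integration.integral_cong) (auto simp: ind_cell)
  also have "\<dots> = (\<Sum>k<K. p k * (\<bar>a\<bar> / 2 * (\<bar>b\<bar> / 2)))"
    using mixture(2)[of "\<lambda>w. sI a (Re (fst w), Re (snd w)) * sI b (Im (fst w), Im (snd w))", OF _ Q_cell(1)[OF _ a b]]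
      Q_cell(2)[OF _ a b] by simp
  also have "\<dots> = (\<Sum>k<K. p k) * (\<bar>a\<bar> / 2 * (\<bar>b\<bar> / 2))"
    by (rule sum_distrib_right[symmetric])
  also have "\<dots> = \<bar>a\<bar> * \<bar>b\<bar> / 4"
    by (simp add: p_sum)
  finally show ?thesis .
qed

lemma M_E:
  assumes a: "a \<in> {-1,0,1}" and b: "b \<in> {-1,0,1}"
  shows "(\<integral>x. indicator (Acell (a, b)) x *\<^sub>R h x \<partial>M) = Complex (a * \<bar>b\<bar> / 2 * Mv) (\<bar>a\<bar> * b / 2 * Mv)"
proof -
  have iA: "integrable M (\<lambda>x. indicator (Acell (a, b)) x *\<^sub>R h x)"
    using Acell_sets h_int by (rule integrable_mult_indicator)
  have "Re (\<integral>x. indicator (Acell (a, b)) x *\<^sub>R h x \<partial>M) = (\<integral>x. Re (indicator (Acell (a, b)) x *\<^sub>R h x) \<partial>M)"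
    by (rule integral_Re[OF iA, symmetric])
  also have "\<dots> = (\<integral>w. (Re (fst (h w, n w)) * sI a (Re (fst (h w, n w)), Re (snd (h w, n w)))) * sI b (Im (fst (h w, n w)), Im (snd (h w, n w))) \<partial>M)"
    by (intro Bochner_Integration.integral_cong) (auto simp: ind_cell)
  also have "\<dots> = (\<Sum>k<K. p k * (a * mm (s k) * (\<bar>b\<bar> / 2)))"
    using mixture(2)[of "\<lambda>w. (Re (fst w) * sI a (Re (fst w), Re (snd w))) * sI b (Im (fst w), Im (snd w))", OF _ Q_re(1)[OF _ a b]]
      Q_re(2)[OF _ a b] by simp
  also have "\<dots> = a * \<bar>b\<bar> / 2 * Mv"
    by (simp add: Mv_def sum_distrib_left sum_distrib_right ac_simps)
  finally have re: "Re (\<integral>x. indicator (Acell (a, b)) x *\<^sub>R h x \<partial>M) = a * \<bar>b\<bar> / 2 * Mv" .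
  have "Im (\<integral>x. indicator (Acell (a, b)) x *\<^sub>R h x \<partial>M) = (\<integral>x. Im (indicator (Acell (a, b)) x *\<^sub>R h x) \<partial>M)"
    by (rule integral_Im[OF iA, symmetric])
  also have "\<dots> = (\<integral>w. sI a (Re (fst (h w, n w)), Re (snd (h w, n w))) * (Im (fst (h w, n w)) * sI b (Im (fst (h w, n w)), Im (snd (h w, n w)))) \<partial>M)"
    by (intro Bochner_Integration.integral_cong) (auto simp: ind_cell)
  also have "\<dots> = (\<Sum>k<K. p k * (\<bar>a\<bar> / 2 * (b * mm (s k))))"
    using mixture(2)[of "\<lambda>w. sI a (Re (fst w), Re (snd w)) * (Im (fst w) * sI b (Im (fst w), Im (snd w)))", OF _ Q_im(1)[OF _ a b]]
      Q_im(2)[OF _ a b] by simp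
  also have "\<dots> = \<bar>a\<bar> * b / 2 * Mv"
    by (simp add: Mv_def sum_distrib_left sum_distrib_right ac_simps)
  finally have im: "Im (\<integral>x. indicator (Acell (a, b)) x *\<^sub>R h x \<partial>M) = \<bar>a\<bar> * b / 2 * Mv" .
  show ?thesis using re im by (simp add: complex_eq_iff)
qed

lemma Qb_eq: "Qb y1 = Qb y2 \<longleftrightarrow> (sgn (Re y1), sgn (Im y1)) = (sgn (Re y2), sgn (Im y2))"
  by (simp add: Qb_def divide_cancel_right complex_eq_iff)

lemma cm_eq: "cond_mean_disc M h (\<lambda>x. Qb (h x + n x)) = cond_mean_disc M h T"
  by (rule ext) (simp add: cond_mean_disc_def T_def Qb_eq)

lemma term_val:
  assumes a: "a \<in> {-1,0,1::real}" and b: "b \<in> {-1,0,1::real}"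
  shows "(cmod (Complex (a * \<bar>b\<bar> / 2 * Mv) (\<bar>a\<bar> * b / 2 * Mv)))\<^sup>2 / (\<bar>a\<bar> * \<bar>b\<bar> / 4) = \<bar>a\<bar> * \<bar>b\<bar> * (2 * Mv\<^sup>2)"
  using a b unfolding cmod_power2 by (auto simp: power2_eq_square field_simps)

lemma sum9: "(\<Sum>q\<in>{-1,0,1::real} \<times> {-1,0,1::real}. \<bar>fst q\<bar> * \<bar>snd q\<bar> * c) = 4 * c"
  by (simp add: sum.cartesian_product[symmetric])

lemma mse_val: "mse_quant M h n = (\<Sum>k<K. p k * s k) - 8 * Mv\<^sup>2"
proof -
  have "mse_quant M h n = (\<integral>w. (cmod (h w - cond_mean_disc M h T w))\<^sup>2 \<partial>M)"
    by (simp add: mse_quant_def cm_eq)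
  also have "\<dots> = (\<integral>w. (cmod (h w))\<^sup>2 \<partial>M)
     - (\<Sum>q\<in>{-1,0,1::real} \<times> {-1,0,1::real}. (cmod (\<integral>x. indicator {x\<in>space M. T x = q} x *\<^sub>R h x \<partial>M))\<^sup>2 / measure M {x\<in>space M. T x = q})"
  proof (rule mse_formula)
    show "h \<in> borel_measurable M" by simp
    show "integrable M (\<lambda>x. (cmod (h x))\<^sup>2)" by (rule M_sq(1))
    show "finite ({-1,0,1::real} \<times> {-1,0,1::real})" by simp
    show "T x \<in> {-1,0,1} \<times> {-1,0,1}" for x by (auto simp: T_def sgn_if)
    show "{x \<in> space M. T x = q} \<in> events" for q using Acell_sets[of q] by (simp add: Acell_def)
  qed
  also have "(\<Sum>q\<in>{-1,0,1::real} \<times> {-1,0,1::real}. (cmod (\<integral>x. indicator {x\<in>space M. T x = q} x *\<^sub>R h x \<partial>M))\<^sup>2 / measure M {x\<in>space M. T x = q})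
      = (\<Sum>q\<in>{-1,0,1::real} \<times> {-1,0,1::real}. \<bar>fst q\<bar> * \<bar>snd q\<bar> * (2 * Mv\<^sup>2))"
  proof (rule sum.cong[OF refl])
    fix q :: "real \<times> real" assume q: "q \<in> {-1,0,1} \<times> {-1,0,1}"
    obtain a b where qab: "q = (a, b)" and a: "a \<in> {-1,0,1::real}" and b: "b \<in> {-1,0,1::real}"
      using q by auto
    have "{x\<in>space M. T x = q} = Acell (a, b)" by (simp add: Acell_def qab)
    then show "(cmod (\<integral>x. indicator {x\<in>space M. T x = q} x *\<^sub>R h x \<partial>M))\<^sup>2 / measure M {x\<in>space M. T x = q}
       = \<bar>fst q\<bar> * \<bar>snd q\<bar> * (2 * Mv\<^sup>2)"
      using term_val[OF a b] by (simp add: M_E[OF a b] M_P[OF a b] qab)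
  qed
  also have "\<dots> = 8 * Mv\<^sup>2" by (simp add: sum9)
  finally show ?thesis using M_sq(2) by simp
qed

end

lemma tangent:
  fixes x m e :: real
  assumes x: "0 < x" and m: "0 < m" and e: "0 < e"
  shows "x / sqrt (x + e) \<le> m / sqrt (m + e) + (m + 2 * e) / (2 * sqrt (m + e) ^ 3) * (x - m)"
proof -
  define a where "a = sqrt (x + e)"
  define b where "b = sqrt (m + e)"
  have a0: "0 < a" and b0: "0 < b" using x m e by (auto simp: a_def b_def)
  have xa: "x = a\<^sup>2 - e" and mb: "m = b\<^sup>2 - e" using x m e by (auto simp: a_def b_def)
  have key: "(b\<^sup>2 - e) / b + (b\<^sup>2 + e) / (2 * b ^ 3) * (a\<^sup>2 - b\<^sup>2) - (a\<^sup>2 - e) / a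
      = (a * b\<^sup>2 * (a - b)\<^sup>2 + e * (a - b)\<^sup>2 * (a + 2 * b)) / (2 * a * b ^ 3)"
    using a0 b0 by (simp add: field_simps power2_eq_square power3_eq_cube)
  have "0 \<le> (a * b\<^sup>2 * (a - b)\<^sup>2 + e * (a - b)\<^sup>2 * (a + 2 * b)) / (2 * a * b ^ 3)"
    using a0 b0 e by (intro divide_nonneg_pos add_nonneg_nonneg mult_nonneg_nonneg) auto
  then have "(a\<^sup>2 - e) / a \<le> (b\<^sup>2 - e) / b + (b\<^sup>2 + e) / (2 * b ^ 3) * (a\<^sup>2 - b\<^sup>2)"
    using key by linarith
  moreover have "x / sqrt (x + e) = (a\<^sup>2 - e) / a"
    unfolding a_def[symmetric] using xa by simp
  moreover have "m / sqrt (m + e) + (m + 2 * e) / (2 * sqrt (m + e) ^ 3) * (x - m)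
      = (b\<^sup>2 - e) / b + (b\<^sup>2 + e) / (2 * b ^ 3) * (a\<^sup>2 - b\<^sup>2)"
    unfolding b_def[symmetric] using xa mb by simp
  ultimately show ?thesis by linarith
qed

lemma jensen_mm:
  fixes K :: nat and p s :: "nat \<Rightarrow> real" and e :: real
  assumes p_pos: "\<forall>k<K. p k > 0" and p_sum: "(\<Sum>k<K. p k) = 1" and s_pos: "\<forall>k<K. s k > 0" and e: "0 < e"
  shows "(\<Sum>k<K. p k * (s k / sqrt (s k + e))) \<le> (\<Sum>k<K. p k * s k) / sqrt ((\<Sum>k<K. p k * s k) + e)"
proof -
  define m where "m = (\<Sum>k<K. p k * s k)"
  have K: "K \<noteq> 0" using p_sum by (metis lessThan_0 sum.empty zero_neq_one)
  have m0: "0 < m" unfolding m_def using K p_pos s_pos by (intro sum_pos) auto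
  define d where "d = (m + 2 * e) / (2 * sqrt (m + e) ^ 3)"
  have "(\<Sum>k<K. p k * (s k / sqrt (s k + e))) \<le> (\<Sum>k<K. p k * (m / sqrt (m + e) + d * (s k - m)))"
  proof (rule sum_mono)
    fix k assume k: "k \<in> {..<K}"
    have "s k / sqrt (s k + e) \<le> m / sqrt (m + e) + d * (s k - m)"
      unfolding d_def using tangent[OF _ m0 e, of "s k"] s_pos k by auto
    then show "p k * (s k / sqrt (s k + e)) \<le> p k * (m / sqrt (m + e) + d * (s k - m))"
      using p_pos k by (intro mult_left_mono) auto
  qed
  also have "\<dots> = (\<Sum>k<K. m / sqrt (m + e) * p k + d * (p k * s k) - (d * m) * p k)"
    by (rule sum.cong) (auto simp: algebra_simps)
  also have "\<dots> = m / sqrt (m + e) * (\<Sum>k<K. p k) + d * (\<Sum>k<K. p k * s k) - (d * m) * (\<Sum>k<K. p k)"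
    by (simp only: sum_subtractf sum.distrib sum_distrib_left)
  also have "\<dots> = m / sqrt (m + e)" using p_sum by (simp add: m_def)
  finally show ?thesis by (simp add: m_def)
qed

theorem theorem3:
  fixes K :: nat and p s :: "nat \<Rightarrow> real" and eta2 :: real
    and M :: "'a measure" and h n :: "'a \<Rightarrow> complex"
    and M' :: "'b measure" and g n' :: "'b \<Rightarrow> complex"
  assumes p_pos: "\<forall>k<K. p k > 0"
    and p_sum: "(\<Sum>k<K. p k) = 1"
    and s_pos: "\<forall>k<K. s k > 0"
    and eta_pos: "eta2 > 0"
    and M: "prob_space M"
    and h: "distributed M lborel h (\<lambda>z. ennreal (gmm_density K p s z))"
    and n: "distributed M lborel n (\<lambda>z. ennreal (cgauss_density eta2 z))"
    and hn: "prob_space.indep_var M borel h borel n"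
    and M': "prob_space M'"
    and g: "distributed M' lborel g (\<lambda>z. ennreal (cgauss_density (\<Sum>k<K. p k * s k) z))"
    and n': "distributed M' lborel n' (\<lambda>z. ennreal (cgauss_density eta2 z))"
    and gn: "prob_space.indep_var M' borel g borel n'"
  shows "mse_quant M' g n' \<le> mse_quant M h n"
proof -
  have K: "K \<noteq> 0" using p_sum by (metis lessThan_0 sum.empty zero_neq_one)
  define sg where "sg = (\<Sum>k<K. p k * s k)"
  have sg_pos: "0 < sg" unfolding sg_def using K p_pos s_pos by (intro sum_pos) auto
  interpret G1: gmm_setup M K p s eta2 h n
    using M p_pos p_sum s_pos eta_pos h n hn by (simp add: gmm_setup_def gmm_setup_axioms_def)
  have g': "distributed M' lborel g (\<lambda>z. ennreal (gmm_density 1 (\<lambda>_. 1) (\<lambda>_. sg) z))"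
    using g by (simp add: gmm_density_def sg_def)
  interpret G2: gmm_setup M' 1 "\<lambda>_. 1" "\<lambda>_. sg" eta2 g n'
    using M' g' n' gn sg_pos eta_pos by (simp add: gmm_setup_def gmm_setup_axioms_def)
  have v1: "mse_quant M h n = sg - 8 * G1.Mv\<^sup>2" using G1.mse_val by (simp add: sg_def)
  have v2: "mse_quant M' g n' = sg - 8 * G2.Mv\<^sup>2" using G2.mse_val by simp
  have c: "v / (2 * sqrt (pi * (v + eta2))) = 1 / (2 * sqrt pi) * (v / sqrt (v + eta2))" for v
    by (simp add: real_sqrt_mult)
  have Mv2: "G2.Mv = 1 / (2 * sqrt pi) * (sg / sqrt (sg + eta2))"
    unfolding G2.Mv_def G2.mm_def by (simp add: c)
  have Mv1: "G1.Mv = 1 / (2 * sqrt pi) * (\<Sum>k<K. p k * (s k / sqrt (s k + eta2)))"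
  proof -
    have "G1.Mv = (\<Sum>k<K. 1 / (2 * sqrt pi) * (p k * (s k / sqrt (s k + eta2))))"
      unfolding G1.Mv_def G1.mm_def by (rule sum.cong[OF refl], subst c, rule mult.left_commute)
    then show ?thesis by (simp only: sum_distrib_left[symmetric])
  qed
  have J: "(\<Sum>k<K. p k * (s k / sqrt (s k + eta2))) \<le> sg / sqrt (sg + eta2)"
    using jensen_mm[OF p_pos p_sum s_pos eta_pos] by (simp add: sg_def)
  have N: "0 \<le> (\<Sum>k<K. p k * (s k / sqrt (s k + eta2)))"
    using p_pos s_pos eta_pos by (intro sum_nonneg mult_nonneg_nonneg divide_nonneg_nonneg) auto
  have "G1.Mv \<le> G2.Mv" unfolding Mv1 Mv2 using J by (intro mult_left_mono) auto
  moreover have "0 \<le> G1.Mv" unfolding Mv1 using N by simp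
  ultimately have "G1.Mv\<^sup>2 \<le> G2.Mv\<^sup>2" by (rule power_mono)
  then show ?thesis unfolding v1 v2 by simp
qed

end
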